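(* Let $k$ be algebraically closed of characteristic $p$, $C\subset\mathbb P^2$ the Fermat curve $X_1^{p+1}+X_2^{p+1}+X_3^{p+1}=0$, and $t=(t_1,t_2,t_3)^T$ representing a point of $C^0(k):=C(k)\setminus C(\mathbb F_{p^2})$. Then the $\mathbb F_{p^2}$-algebra $\mathrm{End}(t)=\{A\in\mathrm{Mat}_3(\mathbb F_{p^2}):A\cdot t\in k\cdot t\}$ is isomorphic to either $\mathbb F_{p^2}$ or $\mathbb F_{p^6}$. *)

theory Defs
  imports "HOL-Analysis.Analysis" "HOL-Computational_Algebra.Polynomial"
begin

text \<open>The subfield of elements fixed by x \<mapsto> x^q; for q = p^n inside an algebraically
closed field of characteristic p this is the finite field with p^n elements.\<close>
definition Fq :: "nat \<Rightarrow> 'a::field set" where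
  "Fq q = {x. x ^ q = x}"

definition on_fermat :: "nat \<Rightarrow> 'a::field^3 \<Rightarrow> bool" where
  "on_fermat p t \<longleftrightarrow> t \<noteq> 0 \<and> t$1 ^ (p+1) + t$2 ^ (p+1) + t$3 ^ (p+1) = 0"

definition rational_pt :: "nat \<Rightarrow> 'a::field^3 \<Rightarrow> bool" where
  "rational_pt p t \<longleftrightarrow> (\<exists>l. l \<noteq> 0 \<and> (\<forall>i. l * t$i \<in> Fq (p^2)))"

definition End_pt :: "nat \<Rightarrow> 'a::field^3 \<Rightarrow> ('a^3^3) set" where
  "End_pt p t = {A. (\<forall>i j. A$i$j \<in> Fq (p^2)) \<and> (\<exists>c. A *v t = c *s t)}"

text \<open>E (a set of matrices over F_{p^2}, with F_{p^2} embedded as scalar matrices) is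
isomorphic as F_{p^2}-algebra to the field F (containing F_{p^2}).\<close>
definition alg_iso :: "nat \<Rightarrow> ('a::field^3^3) set \<Rightarrow> 'a set \<Rightarrow> bool" where
  "alg_iso p E F \<longleftrightarrow> (\<exists>\<phi>. bij_betw \<phi> E F \<and>
      (\<forall>A\<in>E. \<forall>B\<in>E. \<phi> (A + B) = \<phi> A + \<phi> B \<and> \<phi> (A ** B) = \<phi> A * \<phi> B) \<and>
      (\<forall>c\<in>Fq (p^2). \<phi> (mat c) = c))"

end

theory Submission imports Defs "HOL-Computational_Algebra.Primes"
begin

lemma mv3: "((A::'a::comm_ring_1^3^3) *v x) $ i = A$i$1* x$1 + A$i$2* x$2 + A$i$3* x$3"
  by (simp add: matrix_vector_mult_def sum_3)

lemma mm3: "((A::'a::comm_ring_1^3^3) ** B) $ i $ j = A$i$1*B$1$j + A$i$2*B$2$j + A$i$3*B$3$j"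
  by (simp add: matrix_matrix_mult_def sum_3)

lemma vec3_eq: "(x::'a^3) = y \<longleftrightarrow> x$1 = y$1 \<and> x$2 = y$2 \<and> x$3 = y$3"
  by (simp add: vec_eq_iff forall_3)

definition vp :: "nat \<Rightarrow> 'a::field^3 \<Rightarrow> 'a^3" where "vp m v = (\<chi> i. v$i ^ m)"
definition dt :: "'a::field^3 \<Rightarrow> 'a^3 \<Rightarrow> 'a" where "dt u v = u$1* v$1 + u$2* v$2 + u$3* v$3"
definition cr :: "'a::field^3 \<Rightarrow> 'a^3 \<Rightarrow> 'a^3" where
  "cr u v = vector [u$2* v$3 - u$3* v$2, u$3* v$1 - u$1* v$3, u$1* v$2 - u$2* v$1]"

lemma vp_nth[simp]: "vp m v $ i = v$i ^ m" by (simp add: vp_def)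
lemma cr_nth[simp]: "cr u v $ 1 = u$2* v$3 - u$3* v$2" "cr u v $ 2 = u$3* v$1 - u$1* v$3"
  "cr u v $ 3 = u$1* v$2 - u$2* v$1" by (simp_all add: cr_def)

lemma dt_cr1: "dt (cr u v) u = 0" "dt (cr u v) v = 0"
  by (simp_all add: dt_def algebra_simps)

lemma dt_cyc: "dt u (cr v w) = dt w (cr u v)" "dt u (cr v w) = dt v (cr w u)"
  by (simp_all add: dt_def algebra_simps)

lemma dt_comm: "dt u v = dt v u" by (simp add: dt_def algebra_simps)

lemma dt_smult: "dt (c *s u) v = c * dt u v" by (simp add: dt_def algebra_simps)

lemma cr_smult_same: "cr (a *s u) (b *s u) = 0"
  by (simp add: vec3_eq algebra_simps)

lemma cr_swap: "cr u v = - cr v u" by (simp add: vec3_eq algebra_simps)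

lemma bac_cab: "cr x (cr u v) = dt x v *s u - dt x u *s v"
  by (simp add: vec3_eq dt_def algebra_simps)

lemma par:
  assumes "cr x w = 0" "w \<noteq> (0::'a::field^3)"
  shows "\<exists>\<mu>. x = \<mu> *s w"
proof -
  from assms(2) obtain i where i: "w$i \<noteq> 0" by (metis vec_eq_iff zero_index)
  have e: "x$2* w$3 = x$3* w$2" "x$3* w$1 = x$1* w$3" "x$1* w$2 = x$2* w$1"
    using assms(1) by (simp_all add: vec3_eq)
  show ?thesis
  proof (intro exI[of _ "x$i / w$i"])
    show "x = (x$i/w$i) *s w"
      using exhaust_3[of i] e i
      apply (elim disjE)
      by (simp_all add: vec3_eq field_simps)
  qed
qed

lemma perp:
  assumes "dt x u = 0" "dt x v = 0" "cr u v \<noteq> (0::'a::field^3)"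
  shows "\<exists>\<mu>. x = \<mu> *s cr u v"
  using par[OF _ assms(3)] assms(1,2) by (simp add: bac_cab)

lemma cramer:
  "dt u (cr v w) *s x = dt x (cr v w) *s u + dt x (cr w u) *s v + dt x (cr u v) *s w"
  by (simp add: vec3_eq dt_def algebra_simps)

section \<open>Frobenius\<close>

lemma fr_add: "prime CHAR('a::field) \<Longrightarrow> m = CHAR('a)^n \<Longrightarrow> (x + y :: 'a)^m = x^m + y^m"
  by (rule freshmans_dream')

lemma fr_pos: "prime CHAR('a::field) \<Longrightarrow> m = CHAR('a)^n \<Longrightarrow> m > 0"
  using prime_gt_0_nat by auto

lemma fr_minus: assumes "prime CHAR('a::field)" "m = CHAR('a)^n" shows "(- x :: 'a)^m = - (x^m)"
proof -
  have "(x + - x)^m = x^m + (-x)^m" by (rule fr_add[OF assms])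
  moreover have "m > 0" using fr_pos[OF assms] .
  ultimately have "x^m + (-x)^m = 0" by (simp add: power_0_left)
  thus ?thesis by (simp add: eq_neg_iff_add_eq_0 add.commute)
qed

lemma fr_diff: assumes "prime CHAR('a::field)" "m = CHAR('a)^n" shows "(x - y :: 'a)^m = x^m - y^m"
  using fr_add[OF assms, of x "-y"] fr_minus[OF assms, of y] by simp

lemma fr_inj: assumes "prime CHAR('a::field)" "m = CHAR('a)^n" "(x :: 'a)^m = y^m" shows "x = y"
proof -
  have "(x - y)^m = 0" using fr_diff[OF assms(1,2)] assms(3) by simp
  thus ?thesis by simp
qed

lemma vp_cr: assumes "prime CHAR('a::field)" "m = CHAR('a)^n"
  shows "vp m (cr u v) = cr (vp m u) (vp m (v::'a^3))"
  by (simp add: vec3_eq fr_diff[OF assms] power_mult_distrib)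

lemma dt_vp: assumes "prime CHAR('a::field)" "m = CHAR('a)^n"
  shows "dt (vp m u) (vp m v) = (dt u (v::'a^3))^m"
  by (simp add: dt_def fr_add[OF assms] power_mult_distrib)

lemma vp_smult: "vp m (c *s v) = c^m *s vp m (v::'a::field^3)"
  by (simp add: vec3_eq power_mult_distrib)

lemma vp_zero_iff: assumes "m > 0" shows "vp m v = 0 \<longleftrightarrow> v = (0::'a::field^3)"
  using assms by (simp add: vec_eq_iff)

lemma vp_vp: "vp m (vp n v) = vp (n*m) (v::'a::field^3)"
  by (simp add: vec_eq_iff power_mult)

lemma vp_mv: assumes "prime CHAR('a::field)" "m = CHAR('a)^n" "\<forall>i j. A$i$j ^ m = A$i$j"
  shows "vp m (A *v x) = A *v vp m (x::'a^3)"
  using assms(3) by (simp add: vec3_eq mv3 fr_add[OF assms(1,2)] power_mult_distrib)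

section \<open>Geometry\<close>

lemma ratR:
  assumes P: "prime CHAR('a::field)" "m = CHAR('a)^n" and u: "u \<noteq> (0::'a^3)" and e: "vp m u = \<mu> *s u"
  shows "\<exists>l. l \<noteq> 0 \<and> (\<forall>i. l * u$i \<in> Fq m)"
proof -
  from u obtain i where i: "u$i \<noteq> 0" by (metis vec_eq_iff zero_index)
  have m: "m > 0" using fr_pos[OF P] .
  have "vp m u $ i = \<mu> * u$i" using e by simp
  hence ui: "u$i ^ m = \<mu> * u$i" by simp
  hence mu: "\<mu> \<noteq> 0" using i m by auto
  show ?thesis
  proof (intro exI conjI allI)
    show "inverse (u$i) \<noteq> 0" using i by simp
    fix j
    have "vp m u $ j = \<mu> * u$j" using e by simp
    hence uj: "u$j ^ m = \<mu> * u$j" by simp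
    show "inverse (u$i) * u$j \<in> Fq m"
      unfolding Fq_def using i mu
      by (simp add: power_mult_distrib power_inverse ui uj field_simps)
  qed
qed

lemma line_lemma:
  assumes P: "prime CHAR('a::field)" and pd: "p = CHAR('a)"
    and F: "t$1^(p+1) + t$2^(p+1) + t$3^(p+1) = 0"
    and a0: "a \<noteq> (0::'a^3)" and ar: "\<forall>i. a$i ^ (p^2) = a$i" and at: "dt a t = 0"
  shows "cr t (vp (p^2) t) = 0"
proof (rule ccontr)
  let ?q = "p^2"
  have Pp: "p = CHAR('a)^1" using pd by simp
  have Pq: "?q = CHAR('a)^2" using pd by simp
  have p0: "p > 0" using fr_pos[OF P Pp] .
  define w where "w = cr t (vp ?q t)"
  assume w0: "cr t (vp ?q t) \<noteq> 0"
  hence w0': "w \<noteq> 0" by (simp add: w_def)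
  have va: "vp ?q a = a" using ar by (simp add: vec_eq_iff)
  have 1: "dt a (vp ?q t) = 0"
    using dt_vp[OF P Pq, of a t] va at p0 by simp
  obtain \<mu> where mu: "a = \<mu> *s w"
    using perp[OF at 1 w0] w_def by auto
  have 2: "dt (vp p t) t = 0"
    using F by (simp add: dt_def power_Suc2 algebra_simps)
  have vv: "vp ?q t = vp p (vp p t)" by (simp add: vp_vp power2_eq_square)
  have 3: "dt (vp p t) (vp ?q t) = 0"
    unfolding vv dt_vp[OF P Pp] using 2 p0 by (simp add: dt_comm)
  obtain \<nu> where nu: "vp p t = \<nu> *s w"
    using perp[OF 2 3 w0] w_def by auto
  have mu0: "\<mu> \<noteq> 0" using a0 mu by auto
  have tp: "vp p t = (\<nu>/\<mu>) *s a" using mu nu mu0 by (simp add: vec_eq_iff)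
  have "vp p w = cr (vp p t) (vp p (vp ?q t))" unfolding w_def by (rule vp_cr[OF P Pp])
  also have "vp p (vp ?q t) = vp ?q (vp p t)" by (simp add: vp_vp mult.commute)
  also have "cr (vp p t) (vp ?q (vp p t)) = 0"
    unfolding tp vp_smult va by (rule cr_smult_same)
  finally have "vp p w = 0" .
  hence "w = 0" using vp_zero_iff[OF p0] by blast
  thus False using w0' by simp
qed

lemma mv_smult: "(A::'a::field^3^3) *v (c *s x) = c *s (A *v x)"
  by (simp add: vec3_eq mv3 algebra_simps)

lemma dt_add: "dt (x + y) n = dt x n + dt y n" by (simp add: dt_def algebra_simps)

lemma Fq_add: "prime CHAR('a::field) \<Longrightarrow> m = CHAR('a)^n \<Longrightarrow> x \<in> Fq m \<Longrightarrow> y \<in> Fq m \<Longrightarrow> (x + y::'a) \<in> Fq m"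
  by (simp add: Fq_def fr_add)
lemma Fq_diff: "prime CHAR('a::field) \<Longrightarrow> m = CHAR('a)^n \<Longrightarrow> x \<in> Fq m \<Longrightarrow> y \<in> Fq m \<Longrightarrow> (x - y::'a) \<in> Fq m"
  by (simp add: Fq_def fr_diff)
lemma Fq_mult: "x \<in> Fq m \<Longrightarrow> y \<in> Fq m \<Longrightarrow> (x * y::'a::field) \<in> Fq m"
  by (simp add: Fq_def power_mult_distrib)
lemma Fq_0: "m > 0 \<Longrightarrow> (0::'a::field) \<in> Fq m" by (simp add: Fq_def)
lemma Fq_1: "(1::'a::field) \<in> Fq m" by (simp add: Fq_def)

locale fsetup =
  fixes t :: "'k::field^3" and p :: nat
  assumes P: "prime CHAR('k)" and pd: "p = CHAR('k)" and fer: "on_fermat p t"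
    and nr: "\<not> rational_pt p t"
begin

abbreviation "q \<equiv> p^2"
abbreviation "\<sigma> \<equiv> vp q"

lemma Pp: "p = CHAR('k)^1" using pd by simp
lemma Pq: "q = CHAR('k)^2" using pd by simp
lemma q0: "q > 0" using fr_pos[OF P Pq] .
lemma t0: "t \<noteq> 0" using fer by (simp add: on_fermat_def)

lemma nw: "cr t (\<sigma> t) \<noteq> 0"
proof
  assume "cr t (\<sigma> t) = 0"
  hence "cr (\<sigma> t) t = 0" using cr_swap[of t "\<sigma> t"] by simp
  then obtain \<mu> where "\<sigma> t = \<mu> *s t" using par t0 by blast
  from ratR[OF P Pq t0 this] nr show False by (simp add: rational_pt_def)
qed

lemma F1: assumes "\<forall>i. a$i \<in> Fq q" "dt a t = 0" shows "a = 0"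
proof (rule ccontr)
  assume "a \<noteq> 0"
  from line_lemma[OF P pd _ this _ assms(2)] fer assms(1) nw show False
    by (simp add: on_fermat_def Fq_def)
qed

definition "D = dt t (cr (\<sigma> t) (\<sigma> (\<sigma> t)))"

lemma F2: "D \<noteq> 0"
proof
  assume D0: "D = 0"
  define w where "w = cr t (\<sigma> t)"
  have w0: "w \<noteq> 0" using nw w_def by simp
  have sw: "\<sigma> w = cr (\<sigma> t) (\<sigma> (\<sigma> t))" unfolding w_def by (rule vp_cr[OF P Pq])
  have sw0: "\<sigma> w \<noteq> 0" using w0 vp_zero_iff[OF q0] by blast
  have a1: "dt w (\<sigma> t) = 0" unfolding w_def by (rule dt_cr1)
  have a2: "dt w (\<sigma> (\<sigma> t)) = 0" using D0 unfolding D_def w_def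
    by (metis dt_comm dt_cyc(1))
  obtain \<mu> where mu: "w = \<mu> *s \<sigma> w" using perp[OF a1 a2] sw sw0 by auto
  have mu0: "\<mu> \<noteq> 0" using mu w0 by auto
  have "\<sigma> w = inverse \<mu> *s w"
  proof (subst vec_eq_iff, intro allI)
    fix i
    have "w$i = \<mu> * (\<sigma> w)$i" using mu by (metis vector_smult_component)
    thus "(\<sigma> w)$i = (inverse \<mu> *s w)$i" using mu0 by (simp add: field_simps)
  qed
  from ratR[OF P Pq w0 this] obtain l where l: "l \<noteq> 0" "\<forall>i. l * w$i \<in> Fq q" by blast
  have "dt (l *s w) t = 0" unfolding dt_smult w_def dt_cr1 by simp
  hence "l *s w = 0" using F1[of "l *s w"] l(2) by simp
  thus False using l(1) w0 by (simp add: vec_eq_iff)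
qed

definition "rat A \<longleftrightarrow> (\<forall>i j. (A::'k^3^3)$i$j \<in> Fq q)"

lemma ev: assumes "rat A" "A *v x = c *s x" shows "A *v \<sigma> x = c^q *s \<sigma> x"
proof -
  have "\<sigma> (A *v x) = A *v \<sigma> x" using vp_mv[OF P Pq] assms(1) by (simp add: rat_def Fq_def)
  thus ?thesis using assms(2) by (simp add: vp_smult)
qed

lemma F3: assumes "rat A" "A *v t = c *s t" shows "((c^q)^q)^q = c"
proof -
  define t1 where "t1 = \<sigma> t"
  define t2 where "t2 = \<sigma> t1"
  define t3 where "t3 = \<sigma> t2"
  define n where "n = cr t1 t2"
  have e1: "A *v t1 = c^q *s t1" using ev[OF assms] t1_def by simp
  have e2: "A *v t2 = (c^q)^q *s t2" using ev[OF assms(1) e1] t2_def by simp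
  have e3: "A *v t3 = ((c^q)^q)^q *s t3" using ev[OF assms(1) e2] t3_def by simp
  have DD: "D = dt t n" unfolding D_def n_def t1_def t2_def ..
  have al: "dt t3 n = D^q"
  proof -
    have "dt t3 n = dt (\<sigma> t2) (\<sigma> (cr t t1))" unfolding n_def t3_def t2_def t1_def vp_cr[OF P Pq] ..
    also have "\<dots> = (dt t2 (cr t t1))^q" by (rule dt_vp[OF P Pq])
    also have "dt t2 (cr t t1) = D" unfolding DD n_def by (metis dt_cyc(1))
    finally show ?thesis .
  qed
  have al0: "dt t3 n \<noteq> 0" using al F2 by simp
  have cr: "D *s t3 = dt t3 (cr t1 t2) *s t + dt t3 (cr t2 t) *s t1 + dt t3 (cr t t1) *s t2"
    unfolding DD n_def by (rule cramer)
  have "A *v (D *s t3) = (D * ((c^q)^q)^q) *s t3" by (simp add: mv_smult e3)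
  hence "dt (A *v (D *s t3)) n = D * ((c^q)^q)^q * dt t3 n" by (simp add: dt_smult)
  moreover have "dt (A *v (D *s t3)) n = dt t3 n * c * D"
    unfolding cr by (simp add: matrix_vector_right_distrib mv_smult assms(2) e1 e2 dt_add dt_smult
       DD n_def dt_comm[of t1] dt_comm[of t2] dt_cr1)
  ultimately show ?thesis using al0 F2 by auto
qed


lemma mvB: "(\<chi> i j. a * mat 1 $i$j + b * A$i$j + g * C$i$j) *v (x::'k^3) = a *s x + b *s (A *v x) + g *s (C *v x)"
  by (simp add: vec3_eq mv3 mat_def algebra_simps)

lemma rat_B: assumes "rat A" "a \<in> Fq q" "b \<in> Fq q" "g \<in> Fq q"
  shows "rat (\<chi> i j. a * mat 1 $i$j + b * A$i$j + g * (A ** A)$i$j)"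
  unfolding rat_def
proof (intro allI)
  fix i j :: 3
  have A: "\<And>i j. A$i$j \<in> Fq q" using assms(1) by (simp add: rat_def)
  have "mat 1 $ i $ j \<in> Fq q" using q0 by (simp add: mat_def Fq_def)
  moreover have "(A ** A)$i$j \<in> Fq q" unfolding mm3
    by (intro Fq_add[OF P Pq] Fq_mult A)
  ultimately show "(\<chi> i j. a * mat 1 $i$j + b * A$i$j + g * (A ** A)$i$j) $ i $ j \<in> Fq q"
    using assms A by (simp del: mat_def, intro Fq_add[OF P Pq] Fq_mult) auto
qed

lemma F4: assumes "rat A" "A *v t = c *s t" "c^q \<noteq> c" "((d^q)^q)^q = d"
  shows "\<exists>B. rat B \<and> B *v t = d *s t"
proof -
  have c3: "((c^q)^q)^q = c" by (rule F3[OF assms(1,2)])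
  define c1 where "c1 = c^q"
  define c2 where "c2 = c1^q"
  define d1 where "d1 = d^q"
  define d2 where "d2 = d1^q"
  have c2q: "c2^q = c" using c3 by (simp add: c1_def c2_def)
  have d2q: "d2^q = d" using assms(4) by (simp add: d1_def d2_def)
  have n01: "c \<noteq> c1" using assms(3) c1_def by simp
  have n12: "c1 \<noteq> c2"
  proof
    assume "c1 = c2" hence "c^q = c1^q" by (simp add: c1_def c2_def)
    hence "c = c1" by (rule fr_inj[OF P Pq])
    thus False using n01 by simp
  qed
  have n02: "c \<noteq> c2"
  proof
    assume "c = c2" hence "c^q = c" using c2q by simp
    thus False using assms(3) by simp
  qed
  define e0 where "e0 = d/((c-c1)*(c-c2))"
  define e1 where "e1 = d1/((c1-c2)*(c1-c))"
  define e2 where "e2 = d2/((c2-c)*(c2-c1))"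
  have s0: "e0^q = e1" unfolding e0_def e1_def
    by (simp add: power_divide power_mult_distrib fr_diff[OF P Pq] c2q flip: c1_def c2_def d1_def)
  have s1: "e1^q = e2" unfolding e1_def e2_def
    by (simp add: power_divide power_mult_distrib fr_diff[OF P Pq] c2q flip: c1_def c2_def d2_def)
  have s2: "e2^q = e0" unfolding e2_def e0_def
    by (simp add: power_divide power_mult_distrib fr_diff[OF P Pq] c2q d2q flip: c1_def c2_def)
  define \<gamma> where "\<gamma> = e0 + e1 + e2"
  define \<beta> where "\<beta> = - (e0*(c1+c2) + e1*(c2+c) + e2*(c+c1))"
  define \<alpha> where "\<alpha> = e0*c1*c2 + e1*c2*c + e2*c*c1"
  have g: "\<gamma> \<in> Fq q" unfolding Fq_def \<gamma>_def
    by (simp add: fr_add[OF P Pq] s0 s1 s2)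
  have b: "\<beta> \<in> Fq q" unfolding Fq_def mem_Collect_eq \<beta>_def fr_minus[OF P Pq]
    by (simp add: fr_add[OF P Pq] fr_minus[OF P Pq] power_mult_distrib s0 s1 s2 c2q flip: c1_def c2_def)
  have a: "\<alpha> \<in> Fq q" unfolding Fq_def \<alpha>_def
    by (simp add: fr_add[OF P Pq] power_mult_distrib s0 s1 s2 c2q flip: c1_def c2_def)
  have lag0: "\<alpha> + \<beta> * c + \<gamma> * (c * c) = e0*((c-c1)*(c-c2)) + e1*((c-c2)*(c-c)) + e2*((c-c)*(c-c1))"
    unfolding \<alpha>_def \<beta>_def \<gamma>_def by (simp add: algebra_simps)
  have "(c-c1)*(c-c2) \<noteq> 0" using n01 n02 by simp
  hence "e0*((c-c1)*(c-c2)) = d" unfolding e0_def by simp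
  hence lag: "\<alpha> + \<beta> * c + \<gamma> * (c * c) = d" using lag0 by simp
  define B where "B = (\<chi> i j. \<alpha> * mat 1 $i$j + \<beta> * A$i$j + \<gamma> * (A ** A)$i$j)"
  have "B *v t = \<alpha> *s t + \<beta> *s (A *v t) + \<gamma> *s ((A ** A) *v t)" unfolding B_def by (rule mvB)
  also have "(A ** A) *v t = (c * c) *s t"
    by (simp add: matrix_vector_mul_assoc[symmetric] assms(2) mv_smult)
  finally have "B *v t = (\<alpha> + \<beta> * c + \<gamma> * (c * c)) *s t"
    by (simp add: assms(2) vec3_eq algebra_simps)
  thus ?thesis using lag rat_B[OF assms(1) a b g] B_def by blast
qed


definition "i0 = (SOME i. t$i \<noteq> 0)"
lemma i0: "t$i0 \<noteq> 0"
proof -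
  obtain i where "t$i \<noteq> 0" using t0 by (metis vec_eq_iff zero_index)
  thus ?thesis unfolding i0_def by (rule someI)
qed

definition "phi A = (A *v t)$i0 / t$i0"

lemma phi_ev: "A *v t = c *s t \<Longrightarrow> phi A = c"
  using i0 by (simp add: phi_def)

lemma End_ev: "A \<in> End_pt p t \<Longrightarrow> A *v t = phi A *s t"
  unfolding End_pt_def using phi_ev by auto

lemma End_iff: "A \<in> End_pt p t \<longleftrightarrow> rat A \<and> (\<exists>c. A *v t = c *s t)"
  by (simp add: End_pt_def rat_def)

lemma phi_add: "phi (A + B) = phi A + phi B"
  by (simp add: phi_def matrix_vector_mult_add_rdistrib add_divide_distrib)

lemma phi_mult: "A \<in> End_pt p t \<Longrightarrow> B \<in> End_pt p t \<Longrightarrow> phi (A ** B) = phi A * phi B"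
  by (rule phi_ev) (simp add: matrix_vector_mul_assoc[symmetric] End_ev mv_smult)

lemma mat_mv: "mat c *v (x::'k^3) = c *s x"
  by (simp add: vec3_eq mv3 mat_def)

lemma phi_mat: "phi (mat c) = c" by (rule phi_ev) (simp add: mat_mv)

lemma mat_End: "c \<in> Fq q \<Longrightarrow> mat c \<in> End_pt p t"
  unfolding End_iff rat_def using q0 mat_mv[of c t] by (auto simp: mat_def Fq_def)

lemma phi_inj: "inj_on phi (End_pt p t)"
proof (rule inj_onI)
  fix A B assume A: "A \<in> End_pt p t" and B: "B \<in> End_pt p t" and e: "phi A = phi B"
  have z: "(A - B) *v t = 0" using End_ev[OF A] End_ev[OF B] e
    by (simp add: matrix_vector_mult_diff_rdistrib)
  have "\<forall>i. (A - B)$i = 0"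
  proof
    fix i
    show "(A - B)$i = 0"
    proof (rule F1)
      show "\<forall>j. (A - B)$i$j \<in> Fq q" using A B by (auto simp: End_iff rat_def intro: Fq_diff[OF P Pq])
      have "((A - B) *v t)$i = dt ((A - B)$i) t" by (simp only: mv3 dt_def)
      thus "dt ((A - B)$i) t = 0" using z by simp
    qed
  qed
  hence "A - B = 0" by (simp add: vec_eq_iff)
  thus "A = B" by simp
qed

lemma alg_isoI: "phi ` End_pt p t = F \<Longrightarrow> alg_iso p (End_pt p t) F"
  unfolding alg_iso_def
  by (intro exI[of _ phi] conjI ballI)
     (auto simp: bij_betw_def phi_inj phi_add phi_mult phi_mat)

lemma main: "alg_iso p (End_pt p t) (Fq (p^2)) \<or> alg_iso p (End_pt p t) (Fq (p^6))"
proof (cases "\<forall>A\<in>End_pt p t. phi A \<in> Fq q")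
  case True
  have "phi ` End_pt p t = Fq q"
  proof
    show "phi ` End_pt p t \<subseteq> Fq q" using True by auto
    show "Fq q \<subseteq> phi ` End_pt p t"
    proof
      fix c :: 'k assume "c \<in> Fq q"
      hence "mat c \<in> End_pt p t" by (rule mat_End)
      thus "c \<in> phi ` End_pt p t" using phi_mat by (metis image_eqI)
    qed
  qed
  thus ?thesis using alg_isoI by blast
next
  case False
  then obtain A where A: "A \<in> End_pt p t" "phi A \<notin> Fq q" by blast
  have p6: "\<And>x::'k. x^(p^6) = ((x^q)^q)^q"
    by (simp flip: power_mult)
  have "phi ` End_pt p t = Fq (p^6)"
  proof
    show "phi ` End_pt p t \<subseteq> Fq (p^6)"
    proof
      fix c assume "c \<in> phi ` End_pt p t"
      then obtain B where B: "B \<in> End_pt p t" "c = phi B" by blast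
      have "rat B" using B(1) End_iff by blast
      from F3[OF this End_ev[OF B(1)]] show "c \<in> Fq (p^6)" unfolding Fq_def p6 B(2) by simp
    qed
    show "Fq (p^6) \<subseteq> phi ` End_pt p t"
    proof
      fix d :: 'k assume "d \<in> Fq (p^6)"
      hence d: "((d^q)^q)^q = d" using p6[of d] by (simp add: Fq_def)
      have "rat A" using A(1) End_iff by blast
      moreover have "(phi A)^q \<noteq> phi A" using A(2) by (simp add: Fq_def)
      ultimately obtain B where B: "rat B" "B *v t = d *s t"
        using F4[OF _ End_ev[OF A(1)] _ d] by blast
      hence "B \<in> End_pt p t" using End_iff by blast
      moreover have "phi B = d" using phi_ev[OF B(2)] .
      ultimately show "d \<in> phi ` End_pt p t" by (metis image_eqI)
    qed
  qed
  thus ?thesis using alg_isoI by blast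
qed

end


theorem lemma3p12:
  fixes t :: "'k::alg_closed_field ^ 3" and p :: nat
  assumes "prime p" and "CHAR('k) = p"
    and "on_fermat p t" and "\<not> rational_pt p t"
  shows "alg_iso p (End_pt p t) (Fq (p^2)) \<or> alg_iso p (End_pt p t) (Fq (p^6))"
proof -
  interpret fsetup t p using assms by unfold_locales auto
  show ?thesis by (rule main)
qed

end
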